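(* Let $\Gamma$ be the graph with vertex set $\{v_{n,k}: n\in\mathbb Z,\ k\in\mathbb Z/10\mathbb Z\}$ and edge set $\{v_{n,k}v_{n,k+1}\}\cup\{v_{n,2k+1}v_{n+1,4k+2}\}$ ($n\in\mathbb Z$, $k\in\mathbb Z/10\mathbb Z$). Then every automorphism $\phi$ of $\Gamma$ is uniquely determined by the pair $(\phi(v_{0,1}),\phi(v_{0,2}))$.
   Context: Indices $k$ are taken modulo 10. *)

theory Defs
  imports Main "HOL-Library.Numeral_Type"
begin

type_synonym vertex = "int \<times> 10"

definition gamma_edge :: "vertex \<Rightarrow> vertex \<Rightarrow> bool" where
  "gamma_edge u w \<longleftrightarrow>
     (\<exists>n k. u = (n, k) \<and> w = (n, k + 1)) \<or>
     (\<exists>n k. u = (n, 2 * k + 1) \<and> w = (n + 1, 4 * k + 2))"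

definition gamma_adj :: "vertex \<Rightarrow> vertex \<Rightarrow> bool" where
  "gamma_adj u w \<longleftrightarrow> gamma_edge u w \<or> gamma_edge w u"

definition gamma_aut :: "(vertex \<Rightarrow> vertex) \<Rightarrow> bool" where
  "gamma_aut \<phi> \<longleftrightarrow> bij \<phi> \<and> (\<forall>u w. gamma_adj u w \<longleftrightarrow> gamma_adj (\<phi> u) (\<phi> w))"

end

theory Submission imports Defs begin



lemma ten_cases: "(k::10) = 0 \<or> k = 1 \<or> k = 2 \<or> k = 3 \<or> k = 4 \<or> k = 5 \<or> k = 6 \<or> k = 7 \<or> k = 8 \<or> k = 9"
proof (induct k rule: bit0_induct)
  case (of_int z)
  then have "0 \<le> z" "z < 10" by simp_all
  then have "z = 0 \<or> z = 1 \<or> z = 2 \<or> z = 3 \<or> z = 4 \<or> z = 5 \<or> z = 6 \<or> z = 7 \<or> z = 8 \<or> z = 9" by presburger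
  then show ?case by auto
qed

definition odds :: "10 set" where "odds = {1,3,5,7,9}"

definition nbr :: "vertex \<Rightarrow> vertex set" where
  "nbr v = (case v of (n,k) \<Rightarrow> {(n,k+1),(n,k-1), if k \<in> odds then (n+1,2*k) else (n-1,3*k+5)})"

lemma edge_iff: "gamma_edge (n,k) (m,l) \<longleftrightarrow> (m = n \<and> l = k+1) \<or> (m = n+1 \<and> k \<in> odds \<and> l = 2*k)"
proof
  assume "gamma_edge (n,k) (m,l)"
  then show "(m = n \<and> l = k+1) \<or> (m = n+1 \<and> k \<in> odds \<and> l = 2*k)"
    unfolding gamma_edge_def
  proof (elim disjE exE conjE)
    fix n' j assume "(n, k) = (n', 2 * j + 1)" "(m, l) = (n' + 1, 4 * j + 2)"
    then show ?thesis using ten_cases[of j] by (auto simp: odds_def)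
  qed auto
next
  assume "(m = n \<and> l = k+1) \<or> (m = n+1 \<and> k \<in> odds \<and> l = 2*k)"
  then show "gamma_edge (n,k) (m,l)"
  proof (elim disjE conjE)
    assume "m = n+1" "k \<in> odds" "l = 2*k"
    then have "(n,k) = (n, 2*(3*k+2)+1) \<and> (m,l) = (n+1, 4*(3*k+2)+2)"
      using ten_cases[of k] by (auto simp: odds_def)
    then show ?thesis by (unfold gamma_edge_def) blast
  qed (auto simp: gamma_edge_def)
qed

lemma down_iff: "(l \<in> odds \<and> k = 2*l) \<longleftrightarrow> (k \<notin> odds \<and> l = 3*k+5)"
proof
  assume "l \<in> odds \<and> k = 2*l" then show "k \<notin> odds \<and> l = 3*k+5"
    unfolding odds_def by (elim conjE insertE; simp)
next
  assume "k \<notin> odds \<and> l = 3*k+5" then show "l \<in> odds \<and> k = 2*l"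
    using ten_cases[of k] unfolding odds_def by (elim conjE disjE; simp)
qed

lemma adj_nbr: "gamma_adj v w \<longleftrightarrow> w \<in> nbr v"
proof -
  obtain n k where v: "v = (n,k)" by force
  obtain m l where w: "w = (m,l)" by force
  have "gamma_adj (n,k) (m,l) \<longleftrightarrow> (m = n \<and> (l = k+1 \<or> l = k - 1)) \<or> (m = n+1 \<and> k \<in> odds \<and> l = 2*k)
     \<or> (m = n - 1 \<and> (l \<in> odds \<and> k = 2*l))"
  proof -
    have e1: "(n = m \<and> k = l + 1) = (m = n \<and> l = k - 1)" by auto
    have e2: "(n = m + 1) = (m = n - 1)" by auto
    show ?thesis by (simp only: gamma_adj_def edge_iff e1 e2) blast
  qed
  also have "\<dots> \<longleftrightarrow> (m,l) \<in> nbr (n,k)" unfolding down_iff[of l k] nbr_def prod.case by (cases "k \<in> odds") (simp_all only: if_True if_False insert_iff singleton_iff empty_iff prod.inject, blast+)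
  finally show ?thesis unfolding v w .
qed
lemma bex_ins_diff: "(\<exists>x\<in>insert a A - B. P x) = ((a \<notin> B \<and> P a) \<or> (\<exists>x\<in>A - B. P x))" by auto
lemma ball_ins_diff: "(\<forall>x\<in>insert a A - B. P x) = ((a \<notin> B \<longrightarrow> P a) \<and> (\<forall>x\<in>A - B. P x))" by auto


lemma num10: "(-1::10) = 9" "(10::10) = 0" "(11::10) = 1" "(13::10) = 3" "(14::10) = 4" "(17::10) = 7" "(18::10) = 8" "(23::10) = 3" "(29::10) = 9"
  by simp_all

lemma nbr0: "nbr (n,0) = {(n,1),(n,9),(n-1,5)}" by (simp add: nbr_def odds_def num10)
lemma nbr1: "nbr (n,1) = {(n,2),(n,0),(n+1,2)}" by (simp add: nbr_def odds_def num10)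
lemma nbr2: "nbr (n,2) = {(n,3),(n,1),(n-1,1)}" by (simp add: nbr_def odds_def num10)
lemma nbr3: "nbr (n,3) = {(n,4),(n,2),(n+1,6)}" by (simp add: nbr_def odds_def num10)
lemma nbr4: "nbr (n,4) = {(n,5),(n,3),(n-1,7)}" by (simp add: nbr_def odds_def num10)
lemma nbr5: "nbr (n,5) = {(n,6),(n,4),(n+1,0)}" by (simp add: nbr_def odds_def num10)
lemma nbr6: "nbr (n,6) = {(n,7),(n,5),(n-1,3)}" by (simp add: nbr_def odds_def num10)
lemma nbr7: "nbr (n,7) = {(n,8),(n,6),(n+1,4)}" by (simp add: nbr_def odds_def num10)
lemma nbr8: "nbr (n,8) = {(n,9),(n,7),(n-1,9)}" by (simp add: nbr_def odds_def num10)
lemma nbr9: "nbr (n,9) = {(n,0),(n,8),(n+1,8)}" by (simp add: nbr_def odds_def num10)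
lemmas nbrs = nbr0 nbr1 nbr2 nbr3 nbr4 nbr5 nbr6 nbr7 nbr8 nbr9

definition W5 :: "vertex \<Rightarrow> vertex \<Rightarrow> vertex \<Rightarrow> vertex \<Rightarrow> bool" where
  "W5 a b s t \<longleftrightarrow> (\<exists>x1\<in>nbr s - {a,b}. \<exists>x2\<in>nbr x1 - {a,b}. \<exists>x3\<in>nbr x2 - {a,b}.
      \<exists>x4\<in>nbr x3 - {a,b}. t \<in> nbr x4)"

lemma W5I:
  assumes "pa \<in> nbr s" "pa \<noteq> a" "pa \<noteq> b" "pb \<in> nbr pa" "pb \<noteq> a" "pb \<noteq> b"
    "pc \<in> nbr pb" "pc \<noteq> a" "pc \<noteq> b" "pd \<in> nbr pc" "pd \<noteq> a" "pd \<noteq> b" "t \<in> nbr pd"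
  shows "W5 a b s t"
  unfolding W5_def using assms by blast

lemma W5_none:
  assumes "nbr s - {a,b} \<subseteq> SA" "\<forall>x\<in>SA. nbr x - {a,b} \<subseteq> SB" "\<forall>x\<in>SB. nbr x - {a,b} \<subseteq> SC"
    "\<forall>x\<in>SC. nbr x - {a,b} \<subseteq> SD" "\<forall>x\<in>SD. t \<notin> nbr x"
  shows "\<not> W5 a b s t"
  unfolding W5_def using assms by blast

lemma aut_inj: "gamma_aut f \<Longrightarrow> f x = f y \<longleftrightarrow> x = y"
  unfolding gamma_aut_def by (simp add: bij_is_inj inj_eq)

lemma aut_adj: assumes "gamma_aut f" shows "gamma_adj (f u) (f w) \<longleftrightarrow> gamma_adj u w"
proof -
  have h: "\<forall>u w. gamma_adj u w \<longleftrightarrow> gamma_adj (f u) (f w)"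
    using assms unfolding gamma_aut_def by (rule conjunct2)
  show ?thesis using spec[OF spec[OF h, of u], of w] by (rule sym)
qed

lemma aut_nbr: "gamma_aut f \<Longrightarrow> f w \<in> nbr (f u) \<longleftrightarrow> w \<in> nbr u"
  using aut_adj[of f u w] by (simp add: adj_nbr)

lemma aut_comp: "gamma_aut f \<Longrightarrow> gamma_aut g \<Longrightarrow> gamma_aut (f \<circ> g)"
proof -
  assume f: "gamma_aut f" and g: "gamma_aut g"
  have "bij (f \<circ> g)" using f g unfolding gamma_aut_def by (simp add: bij_comp)
  moreover have "gamma_adj u w \<longleftrightarrow> gamma_adj ((f \<circ> g) u) ((f \<circ> g) w)" for u w
    using aut_adj[OF f, of "g u" "g w"] aut_adj[OF g, of u w] by simp
  ultimately show ?thesis unfolding gamma_aut_def by blast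
qed

lemma aut_inv: "gamma_aut f \<Longrightarrow> gamma_aut (inv f)"
proof -
  assume a: "gamma_aut f"
  then have b: "bij f" unfolding gamma_aut_def by blast
  have "gamma_adj u w \<longleftrightarrow> gamma_adj (inv f u) (inv f w)" for u w
  proof -
    have "gamma_adj u w \<longleftrightarrow> gamma_adj (f (inv f u)) (f (inv f w))"
      using b by (simp add: bij_is_surj surj_f_inv_f)
    also have "\<dots> \<longleftrightarrow> gamma_adj (inv f u) (inv f w)" using aut_adj[OF a] by blast
    finally show ?thesis .
  qed
  then show ?thesis unfolding gamma_aut_def using b bij_imp_bij_inv by blast
qed

definition tr :: "int \<Rightarrow> vertex \<Rightarrow> vertex" where "tr m v = (fst v + m, snd v)"

lemma tr_tr: "tr m (tr (-m) v) = v" "tr (-m) (tr m v) = v"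
  unfolding tr_def by auto

lemma tr_aut: "gamma_aut (tr m)"
proof -
  have "bij (tr m)"
    by (rule bij_betw_byWitness[where f'="tr (-m)"]) (auto simp: tr_tr)
  moreover have "gamma_adj u w \<longleftrightarrow> gamma_adj (tr m u) (tr m w)" for u w
  proof -
    obtain n k where u: "u = (n,k)" by force
    obtain n' k' where w: "w = (n',k')" by force
    show ?thesis unfolding u w tr_def gamma_adj_def by (simp add: edge_iff)
  qed
  ultimately show ?thesis unfolding gamma_aut_def by blast
qed

lemma W5_pres:
  assumes f: "gamma_aut f" and fa: "f a = a" and fb: "f b = b" and W: "W5 a b s t"
  shows "W5 a b (f s) (f t)"
proof -
  have nab: "f x \<notin> {a,b} \<longleftrightarrow> x \<notin> {a,b}" for x
    using aut_inj[OF f, of x a] aut_inj[OF f, of x b] fa fb by auto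
  from W obtain x1 x2 x3 x4 where
    "x1 \<in> nbr s - {a,b}" "x2 \<in> nbr x1 - {a,b}" "x3 \<in> nbr x2 - {a,b}" "x4 \<in> nbr x3 - {a,b}" "t \<in> nbr x4"
    unfolding W5_def by blast
  then have "f x1 \<in> nbr (f s) - {a,b}" "f x2 \<in> nbr (f x1) - {a,b}" "f x3 \<in> nbr (f x2) - {a,b}"
     "f x4 \<in> nbr (f x3) - {a,b}" "f t \<in> nbr (f x4)"
    using aut_nbr[OF f] nab by (simp_all del: insert_iff)
  then show ?thesis unfolding W5_def by blast
qed

lemma key:
  assumes f: "gamma_aut f" and fa: "f a = a" and fb: "f b = b"
    and Na: "nbr a \<subseteq> {b,x,y}" and Nb: "nbr b \<subseteq> {a,c,d}"
    and ax: "x \<in> nbr a" and ay: "y \<in> nbr a" and bc: "c \<in> nbr b"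
    and dist: "c \<noteq> a" "y \<noteq> b" "x \<noteq> b" "x \<noteq> y"
    and W1: "W5 a b c y" and W2: "W5 a b c x" and W3: "\<not> W5 a b d y"
  shows "f c = c"
proof (rule ccontr)
  assume nc: "f c \<noteq> c"
  have "f c \<in> nbr b" using aut_nbr[OF f, of c b] fb bc by simp
  moreover have "f c \<noteq> a" using aut_inj[OF f, of c a] fa dist by auto
  ultimately have "f c \<in> {a,c,d}" using Nb by blast
  then have fcd: "f c = d" using \<open>f c \<noteq> a\<close> nc by simp
  have "f y \<in> nbr a" using aut_nbr[OF f, of y a] fa ay by simp
  moreover have "f y \<noteq> b" using aut_inj[OF f, of y b] fb dist by auto
  ultimately have "f y \<in> {b,x,y}" using Na by blast
  then have fy: "f y = x \<or> f y = y" using \<open>f y \<noteq> b\<close> by simp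
  have "f x \<in> nbr a" using aut_nbr[OF f, of x a] fa ax by simp
  moreover have "f x \<noteq> b" using aut_inj[OF f, of x b] fb dist by auto
  ultimately have "f x \<in> {b,x,y}" using Na by blast
  then have fx: "f x = x \<or> f x = y" using \<open>f x \<noteq> b\<close> by simp
  show False
  proof (cases "f y = y")
    case True
    then show False using W5_pres[OF f fa fb W1] fcd W3 by simp
  next
    case False
    then have "f y = x" using fy by simp
    then have "f x = y" using fx aut_inj[OF f, of x y] dist by auto
    then show False using W5_pres[OF f fa fb W2] fcd W3 by simp
  qed
qed

lemma fix3:
  assumes f: "gamma_aut f" and "f p = p" "f q1 = q1" "f q2 = q2"
    and "nbr p \<subseteq> {q1,q2,r}" "r \<in> nbr p" "r \<noteq> q1" "r \<noteq> q2"
  shows "f r = r"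
proof -
  have "f r \<in> nbr p" using aut_nbr[OF f, of r p] assms by simp
  moreover have "f r \<noteq> q1" "f r \<noteq> q2" using aut_inj[OF f, of r q1] aut_inj[OF f, of r q2] assms by auto
  moreover have "f r \<in> {q1,q2,r}" using assms(5) calculation(1) by blast
  ultimately show ?thesis by simp
qed

lemma fixc:
  assumes f: "gamma_aut f" and "f p = p" "f q = q"
    and "nbr p \<inter> nbr q \<subseteq> {r}" "r \<in> nbr p" "r \<in> nbr q"
  shows "f r = r"
proof -
  have "f r \<in> nbr p" "f r \<in> nbr q" using aut_nbr[OF f, of r p] aut_nbr[OF f, of r q] assms by simp_all
  then show ?thesis using assms(4) by blast
qed

lemma layer:
  assumes f: "gamma_aut f" and f1: "f (0,1) = (0,1)" and f2: "f (0,2) = (0,2)"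
  shows "(\<forall>k. f (0,k) = (0,k)) \<and> f (1,1) = (1,1) \<and> f (1,2) = (1,2) \<and> f (-1,1) = (-1,1) \<and> f (-1,2) = (-1,2)"
proof -
  have f3: "f (0,3) = (0,3)"
  proof (rule key[OF f f1 f2, where x="(0,0)" and y="(1,2)" and d="(-1,1)"])
    show "W5 (0,1) (0,2) (0,3) (1,2)" by (rule W5I[where pa="(0,4)" and pb="(0,5)" and pc="(1,0)" and pd="(1,1)"]) (simp_all add: nbrs insert_Diff_if)
    show "W5 (0,1) (0,2) (0,3) (0,0)" by (rule W5I[where pa="(0,4)" and pb="(-1,7)" and pc="(-1,6)" and pd="(-1,5)"]) (simp_all add: nbrs insert_Diff_if)
    show "\<not> W5 (0,1) (0,2) (-1,1) (1,2)" by (rule W5_none[where SA="{(-1,0),(-1,2)}" and SB="{(-2,1),(-2,5),(-1,1),(-1,3),(-1,9)}" and SC="{(-2,0),(-2,2),(-2,4),(-2,6),(-1,0),(-1,2),(-1,4),(-1,8),(0,6),(0,8)}" and SD="{(-3,1),(-3,3),(-3,5),(-3,7),(-2,1),(-2,3),(-2,5),(-2,7),(-2,9),(-1,1),(-1,3),(-1,5),(-1,7),(-1,9),(0,5),(0,7),(0,9)}"]) (simp_all add: nbrs insert_Diff_if)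
  qed (simp_all add: nbrs insert_Diff_if)
  have f4: "f (0,4) = (0,4)"
  proof (rule key[OF f f2 f3, where x="(0,1)" and y="(-1,1)" and d="(1,6)"])
    show "W5 (0,2) (0,3) (0,4) (-1,1)" by (rule W5I[where pa="(0,5)" and pb="(0,6)" and pc="(-1,3)" and pd="(-1,2)"]) (simp_all add: nbrs insert_Diff_if)
    show "W5 (0,2) (0,3) (0,4) (0,1)" by (rule W5I[where pa="(0,5)" and pb="(1,0)" and pc="(1,1)" and pd="(1,2)"]) (simp_all add: nbrs insert_Diff_if)
    show "\<not> W5 (0,2) (0,3) (1,6) (-1,1)" by (rule W5_none[where SA="{(1,5),(1,7)}" and SB="{(1,4),(1,6),(1,8),(2,0),(2,4)}" and SC="{(0,7),(0,9),(1,3),(1,5),(1,7),(1,9),(2,1),(2,3),(2,5),(2,9)}" and SD="{(0,0),(0,6),(0,8),(1,0),(1,2),(1,4),(1,6),(1,8),(2,0),(2,2),(2,4),(2,6),(2,8),(3,0),(3,2),(3,6),(3,8)}"]) (simp_all add: nbrs insert_Diff_if)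
  qed (simp_all add: nbrs insert_Diff_if)
  have f5: "f (0,5) = (0,5)"
  proof (rule key[OF f f3 f4, where x="(0,2)" and y="(1,6)" and d="(-1,7)"])
    show "W5 (0,3) (0,4) (0,5) (1,6)" by (rule W5I[where pa="(0,6)" and pb="(0,7)" and pc="(1,4)" and pd="(1,5)"]) (simp_all add: nbrs insert_Diff_if)
    show "W5 (0,3) (0,4) (0,5) (0,2)" by (rule W5I[where pa="(0,6)" and pb="(-1,3)" and pc="(-1,2)" and pd="(-1,1)"]) (simp_all add: nbrs insert_Diff_if)
    show "\<not> W5 (0,3) (0,4) (-1,7) (1,6)" by (rule W5_none[where SA="{(-1,6),(-1,8)}" and SB="{(-2,3),(-2,9),(-1,5),(-1,7),(-1,9)}" and SC="{(-2,0),(-2,2),(-2,4),(-2,8),(-1,0),(-1,4),(-1,6),(-1,8),(0,0),(0,8)}" and SD="{(-3,1),(-3,5),(-3,7),(-3,9),(-2,1),(-2,3),(-2,5),(-2,7),(-2,9),(-1,1),(-1,3),(-1,5),(-1,7),(-1,9),(0,1),(0,7),(0,9)}"]) (simp_all add: nbrs insert_Diff_if)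
  qed (simp_all add: nbrs insert_Diff_if)
  have f6: "f (0,6) = (0,6)"
  proof (rule key[OF f f4 f5, where x="(0,3)" and y="(-1,7)" and d="(1,0)"])
    show "W5 (0,4) (0,5) (0,6) (-1,7)" by (rule W5I[where pa="(0,7)" and pb="(0,8)" and pc="(-1,9)" and pd="(-1,8)"]) (simp_all add: nbrs insert_Diff_if)
    show "W5 (0,4) (0,5) (0,6) (0,3)" by (rule W5I[where pa="(0,7)" and pb="(1,4)" and pc="(1,5)" and pd="(1,6)"]) (simp_all add: nbrs insert_Diff_if)
    show "\<not> W5 (0,4) (0,5) (1,0) (-1,7)" by (rule W5_none[where SA="{(1,1),(1,9)}" and SB="{(1,0),(1,2),(1,8),(2,2),(2,8)}" and SC="{(0,1),(0,9),(1,1),(1,3),(1,7),(1,9),(2,1),(2,3),(2,7),(2,9)}" and SD="{(0,0),(0,2),(0,8),(1,0),(1,2),(1,4),(1,6),(1,8),(2,0),(2,2),(2,4),(2,6),(2,8),(3,2),(3,4),(3,6),(3,8)}"]) (simp_all add: nbrs insert_Diff_if)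
  qed (simp_all add: nbrs insert_Diff_if)
  have f7: "f (0,7) = (0,7)"
  proof (rule key[OF f f5 f6, where x="(0,4)" and y="(1,0)" and d="(-1,3)"])
    show "W5 (0,5) (0,6) (0,7) (1,0)" by (rule W5I[where pa="(0,8)" and pb="(0,9)" and pc="(1,8)" and pd="(1,9)"]) (simp_all add: nbrs insert_Diff_if)
    show "W5 (0,5) (0,6) (0,7) (0,4)" by (rule W5I[where pa="(0,8)" and pb="(-1,9)" and pc="(-1,8)" and pd="(-1,7)"]) (simp_all add: nbrs insert_Diff_if)
    show "\<not> W5 (0,5) (0,6) (-1,3) (1,0)" by (rule W5_none[where SA="{(-1,2),(-1,4)}" and SB="{(-2,1),(-2,7),(-1,1),(-1,3),(-1,5)}" and SC="{(-2,0),(-2,2),(-2,6),(-2,8),(-1,0),(-1,2),(-1,4),(-1,6),(0,0),(0,2)}" and SD="{(-3,1),(-3,3),(-3,5),(-3,9),(-2,1),(-2,3),(-2,5),(-2,7),(-2,9),(-1,1),(-1,3),(-1,5),(-1,7),(-1,9),(0,1),(0,3),(0,9)}"]) (simp_all add: nbrs insert_Diff_if)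
  qed (simp_all add: nbrs insert_Diff_if)
  have f8: "f (0,8) = (0,8)"
  proof (rule key[OF f f6 f7, where x="(0,5)" and y="(-1,3)" and d="(1,4)"])
    show "W5 (0,6) (0,7) (0,8) (-1,3)" by (rule W5I[where pa="(0,9)" and pb="(0,0)" and pc="(-1,5)" and pd="(-1,4)"]) (simp_all add: nbrs insert_Diff_if)
    show "W5 (0,6) (0,7) (0,8) (0,5)" by (rule W5I[where pa="(0,9)" and pb="(1,8)" and pc="(1,9)" and pd="(1,0)"]) (simp_all add: nbrs insert_Diff_if)
    show "\<not> W5 (0,6) (0,7) (1,4) (-1,3)" by (rule W5_none[where SA="{(1,3),(1,5)}" and SB="{(1,2),(1,4),(1,6),(2,0),(2,6)}" and SC="{(0,1),(0,3),(1,1),(1,3),(1,5),(1,7),(2,1),(2,5),(2,7),(2,9)}" and SD="{(0,0),(0,2),(0,4),(1,0),(1,2),(1,4),(1,6),(1,8),(2,0),(2,2),(2,4),(2,6),(2,8),(3,0),(3,2),(3,4),(3,8)}"]) (simp_all add: nbrs insert_Diff_if)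
  qed (simp_all add: nbrs insert_Diff_if)
  have f9: "f (0,9) = (0,9)"
  proof (rule key[OF f f7 f8, where x="(0,6)" and y="(1,4)" and d="(-1,9)"])
    show "W5 (0,7) (0,8) (0,9) (1,4)" by (rule W5I[where pa="(0,0)" and pb="(0,1)" and pc="(1,2)" and pd="(1,3)"]) (simp_all add: nbrs insert_Diff_if)
    show "W5 (0,7) (0,8) (0,9) (0,6)" by (rule W5I[where pa="(0,0)" and pb="(-1,5)" and pc="(-1,4)" and pd="(-1,3)"]) (simp_all add: nbrs insert_Diff_if)
    show "\<not> W5 (0,7) (0,8) (-1,9) (1,4)" by (rule W5_none[where SA="{(-1,0),(-1,8)}" and SB="{(-2,5),(-2,9),(-1,1),(-1,7),(-1,9)}" and SC="{(-2,0),(-2,4),(-2,6),(-2,8),(-1,0),(-1,2),(-1,6),(-1,8),(0,2),(0,4)}" and SD="{(-3,3),(-3,5),(-3,7),(-3,9),(-2,1),(-2,3),(-2,5),(-2,7),(-2,9),(-1,1),(-1,3),(-1,5),(-1,7),(-1,9),(0,1),(0,3),(0,5)}"]) (simp_all add: nbrs insert_Diff_if)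
  qed (simp_all add: nbrs insert_Diff_if)
  have f0: "f (0,0) = (0,0)"
  proof (rule key[OF f f8 f9, where x="(0,7)" and y="(-1,9)" and d="(1,8)"])
    show "W5 (0,8) (0,9) (0,0) (-1,9)" by (rule W5I[where pa="(0,1)" and pb="(0,2)" and pc="(-1,1)" and pd="(-1,0)"]) (simp_all add: nbrs insert_Diff_if)
    show "W5 (0,8) (0,9) (0,0) (0,7)" by (rule W5I[where pa="(0,1)" and pb="(1,2)" and pc="(1,3)" and pd="(1,4)"]) (simp_all add: nbrs insert_Diff_if)
    show "\<not> W5 (0,8) (0,9) (1,8) (-1,9)" by (rule W5_none[where SA="{(1,7),(1,9)}" and SB="{(1,0),(1,6),(1,8),(2,4),(2,8)}" and SC="{(0,3),(0,5),(1,1),(1,5),(1,7),(1,9),(2,3),(2,5),(2,7),(2,9)}" and SD="{(0,2),(0,4),(0,6),(1,0),(1,2),(1,4),(1,6),(1,8),(2,0),(2,2),(2,4),(2,6),(2,8),(3,0),(3,4),(3,6),(3,8)}"]) (simp_all add: nbrs insert_Diff_if)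
  qed (simp_all add: nbrs insert_Diff_if)

  have all: "\<forall>k. f (0,k) = (0,k)"
  proof
    fix k :: 10
    show "f (0,k) = (0,k)" using ten_cases[of k] f0 f1 f2 f3 f4 f5 f6 f7 f8 f9 by auto
  qed
  have g12: "f (1,2) = (1,2)"
    by (rule fix3[OF f f1 f0 f2]) (simp_all add: nbrs insert_Diff_if)
  have g10: "f (1,0) = (1,0)"
    by (rule fix3[OF f f5 f4 f6]) (simp_all add: nbrs insert_Diff_if)
  have g11: "f (1,1) = (1,1)"
    by (rule fixc[OF f g10 g12]) (simp_all add: nbrs insert_Diff_if)
  have h11: "f (-1,1) = (-1,1)"
    by (rule fix3[OF f f2 f1 f3]) (simp_all add: nbrs insert_Diff_if)
  have h13: "f (-1,3) = (-1,3)"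
    by (rule fix3[OF f f6 f5 f7]) (simp_all add: nbrs insert_Diff_if)
  have h12: "f (-1,2) = (-1,2)"
    by (rule fixc[OF f h11 h13]) (simp_all add: nbrs insert_Diff_if)
  show ?thesis using all g11 g12 h11 h12 by blast
qed

lemma conj_back: "tr (-n) (f (tr n v)) = v \<Longrightarrow> f (tr n v) = tr n v"
  by (metis tr_tr(1))

lemma step:
  assumes f: "gamma_aut f" and a1: "f (n,1) = (n,1)" and a2: "f (n,2) = (n,2)"
  shows "(\<forall>k. f (n,k) = (n,k)) \<and> f (n+1,1) = (n+1,1) \<and> f (n+1,2) = (n+1,2)
     \<and> f (n-1,1) = (n-1,1) \<and> f (n-1,2) = (n-1,2)"
proof -
  define g where "g = tr (-n) \<circ> f \<circ> tr n"
  have g: "gamma_aut g" unfolding g_def by (intro aut_comp tr_aut f)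
  have gv: "g v = tr (-n) (f (tr n v))" for v unfolding g_def by simp
  have "g (0,1) = (0,1)" "g (0,2) = (0,2)" using a1 a2 by (simp_all add: gv tr_def)
  from layer[OF g this] have L: "\<forall>k. g (0,k) = (0,k)" "g (1,1) = (1,1)" "g (1,2) = (1,2)"
    "g (-1,1) = (-1,1)" "g (-1,2) = (-1,2)" by blast+
  have bk: "g v = v \<Longrightarrow> f (tr n v) = tr n v" for v using conj_back[of n f v] gv by simp
  have "f (n,k) = (n,k)" for k using bk[of "(0,k)"] L(1) by (simp add: tr_def)
  moreover have "f (n+1,1) = (n+1,1)" using bk[OF L(2)] by (simp add: tr_def add.commute)
  moreover have "f (n+1,2) = (n+1,2)" using bk[OF L(3)] by (simp add: tr_def add.commute)
  moreover have "f (n-1,1) = (n-1,1)" using bk[OF L(4)] by (simp add: tr_def)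
  moreover have "f (n-1,2) = (n-1,2)" using bk[OF L(5)] by (simp add: tr_def)
  ultimately show ?thesis by blast
qed

lemma fixes_all:
  assumes f: "gamma_aut f" and a1: "f (0,1) = (0,1)" and a2: "f (0,2) = (0,2)"
  shows "f v = v"
proof -
  obtain n k where v: "v = (n,k)" by force
  have "f (n,1) = (n,1) \<and> f (n,2) = (n,2)"
  proof (induct n rule: int_induct[where k=0])
    case base then show ?case using a1 a2 by simp
  next
    case (step1 i) then show ?case using step[OF f] by blast
  next
    case (step2 i) then show ?case using step[OF f] by blast
  qed
  then show ?thesis using step[OF f] v by blast
qed

theorem mainTheorem5:
  assumes "gamma_aut \<phi>" and "gamma_aut \<psi>"
    and "\<phi> (0, 1) = \<psi> (0, 1)" and "\<phi> (0, 2) = \<psi> (0, 2)"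
  shows "\<phi> = \<psi>"
proof
  fix v
  have bp: "bij \<psi>" using assms(2) unfolding gamma_aut_def by blast
  define g where "g = inv \<psi> \<circ> \<phi>"
  have g: "gamma_aut g" unfolding g_def by (intro aut_comp aut_inv assms)
  have ip: "inv \<psi> (\<psi> x) = x" for x using bp by (simp add: bij_is_inj)
  have "g (0,1) = (0,1)" "g (0,2) = (0,2)" unfolding g_def using assms(3,4) ip by simp_all
  then have "g v = v" using fixes_all[OF g] by blast
  then have "\<psi> (inv \<psi> (\<phi> v)) = \<psi> v" unfolding g_def by simp
  then show "\<phi> v = \<psi> v" using bp by (simp add: bij_is_surj surj_f_inv_f)
qed

end
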